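(* Let $(X,d)$ be a locally compact metric space and $f:X\to X$ a homeomorphism satisfying the topological shadowing property. Then for every $\epsilon\in\mathcal{C}^+$ there exists $\delta\in\mathcal{C}^+$ such that for every $\delta$-pseudo-orbit $\{x_n\}_{n\in\mathbb{Z}}$ there is $y\in X$ with $d(x_n,f^n(y))<\epsilon(f^n(y))$ for all $n\in\mathbb{Z}$.
   Context: $\mathcal{C}^+=\{\epsilon:X\to\mathbb{R}^+ : \epsilon \text{ continuous}\}$. For $\delta\in\mathcal{C}^+$, a sequence $\{x_n\}_{n\in\mathbb{Z}}\subset X$ is a $\delta$-pseudo-orbit of $f$ if $d(f(x_n),x_{n+1})<\delta(f(x_n))$ for every $n\in\mathbb{Z}$. For $\epsilon\in\mathcal{C}^+$, the sequence $\{x_n\}$ is $\epsilon$-shadowed by an orbit if there is $y\in X$ with $d(f^n(y),x_n)<\epsilon(x_n)$ for every $n\in\mathbb{Z}$. The homeomorphism $f$ satisfies the topological shadowing property if for every $\epsilon\in\mathcal{C}^+$ there exists $\delta\in\mathcal{C}^+$ such that every $\delta$-pseudo-orbit is $\epsilon$-shadowed by an orbit. *)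

theory Defs
  imports "HOL-Analysis.Analysis"
begin

definition pos_cont :: "('a::metric_space \<Rightarrow> real) \<Rightarrow> bool" where
  "pos_cont e \<longleftrightarrow> continuous_on UNIV e \<and> (\<forall>x. e x > 0)"

definition iterz :: "('a \<Rightarrow> 'a) \<Rightarrow> int \<Rightarrow> 'a \<Rightarrow> 'a" where
  "iterz f n = (if n \<ge> 0 then f ^^ nat n else (inv f) ^^ nat (- n))"

definition pseudo_orbit :: "('a::metric_space \<Rightarrow> 'a) \<Rightarrow> ('a \<Rightarrow> real) \<Rightarrow> (int \<Rightarrow> 'a) \<Rightarrow> bool" where
  "pseudo_orbit f \<delta> x \<longleftrightarrow> (\<forall>n. dist (f (x n)) (x (n + 1)) < \<delta> (f (x n)))"

definition shadowed :: "('a::metric_space \<Rightarrow> 'a) \<Rightarrow> ('a \<Rightarrow> real) \<Rightarrow> (int \<Rightarrow> 'a) \<Rightarrow> bool" where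
  "shadowed f \<epsilon> x \<longleftrightarrow> (\<exists>y. \<forall>n. dist (iterz f n y) (x n) < \<epsilon> (x n))"

definition topological_shadowing :: "('a::metric_space \<Rightarrow> 'a) \<Rightarrow> bool" where
  "topological_shadowing f \<longleftrightarrow>
     (\<forall>\<epsilon>. pos_cont \<epsilon> \<longrightarrow> (\<exists>\<delta>. pos_cont \<delta> \<and>
        (\<forall>x. pseudo_orbit f \<delta> x \<longrightarrow> shadowed f \<epsilon> x)))"

end

theory Submission
  imports Defs
begin

lemma aux_h:
  fixes e :: "'a::metric_space \<Rightarrow> real"
  assumes pc: "pos_cont e"
    and h_def: "h = (\<lambda>x. Inf (range (\<lambda>z. e z + dist x z)))"
  shows "\<And>x. h x \<le> e x" "\<And>x y. h x \<le> h y + dist x y" "\<And>x. h x > 0"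
proof -
  have epos: "\<And>z. e z > 0" using pc unfolding pos_cont_def by auto
  have bdd: "\<And>x. bdd_below (range (\<lambda>z. e z + dist x z))"
  proof (rule bdd_belowI[where m=0])
    fix x v assume "v \<in> range (\<lambda>z. e z + dist x z)"
    then obtain z where "v = e z + dist x z" by auto
    thus "0 \<le> v" using epos[of z] zero_le_dist[of x z] by linarith
  qed
  show "\<And>x. h x \<le> e x"
  proof -
    fix x have "h x \<le> e x + dist x x" unfolding h_def by (rule cInf_lower[OF rangeI bdd])
    thus "h x \<le> e x" by simp
  qed
  show "\<And>x y. h x \<le> h y + dist x y"
  proof -
    fix x y
    have "h x - dist x y \<le> h y" unfolding h_def
    proof (rule cInf_greatest)
      show "range (\<lambda>z. e z + dist y z) \<noteq> {}" by auto
    next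
      fix v assume "v \<in> range (\<lambda>z. e z + dist y z)"
      then obtain z where v: "v = e z + dist y z" by auto
      have "Inf (range (\<lambda>z. e z + dist x z)) \<le> e z + dist x z" by (rule cInf_lower[OF rangeI bdd])
      moreover have "dist x z \<le> dist x y + dist y z" by (rule dist_triangle)
      ultimately show "Inf (range (\<lambda>z. e z + dist x z)) - dist x y \<le> v" using v by linarith
    qed
    thus "h x \<le> h y + dist x y" by linarith
  qed
  show "\<And>x. h x > 0"
  proof -
    fix x
    have "continuous (at x) e" using pc unfolding pos_cont_def
      by (simp add: continuous_on_eq_continuous_at)
    then obtain r where r: "r > 0" "\<And>z. dist z x < r \<Longrightarrow> dist (e z) (e x) < e x / 2"
      using epos[of x] unfolding continuous_at_eps_delta by (metis half_gt_zero)
    have "min (e x / 2) r \<le> h x" unfolding h_def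
    proof (rule cInf_greatest)
      show "range (\<lambda>z. e z + dist x z) \<noteq> {}" by auto
    next
      fix v assume "v \<in> range (\<lambda>z. e z + dist x z)"
      then obtain z where v: "v = e z + dist x z" by auto
      show "min (e x / 2) r \<le> v"
      proof (cases "dist z x < r")
        case True
        then have "dist (e z) (e x) < e x / 2" by (rule r(2))
        then have "e z > e x / 2" unfolding dist_real_def by linarith
        then show ?thesis using v zero_le_dist[of x z] by linarith
      next
        case False
        then show ?thesis using v epos[of z] by (simp add: dist_commute)
      qed
    qed
    thus "h x > 0" using epos[of x] r(1) by (smt (verit) field_sum_of_halves)
  qed
qed

theorem mainTheorem3:
  fixes f :: "'a::metric_space \<Rightarrow> 'a"
  assumes "locally compact (UNIV :: 'a set)"
    and "homeomorphism UNIV UNIV f (inv f)"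
    and "topological_shadowing f"
  shows "\<forall>\<epsilon>. pos_cont \<epsilon> \<longrightarrow> (\<exists>\<delta>. pos_cont \<delta> \<and>
           (\<forall>x. pseudo_orbit f \<delta> x \<longrightarrow>
              (\<exists>y. \<forall>n. dist (x n) (iterz f n y) < \<epsilon> (iterz f n y))))"
proof (intro allI impI)
  fix e :: "'a \<Rightarrow> real" assume pc: "pos_cont e"
  define h where "h = (\<lambda>x. Inf (range (\<lambda>z. e z + dist x z)))"
  note H = aux_h[OF pc h_def]
  have lip: "lipschitz_on 1 UNIV h"
  proof (rule lipschitz_onI)
    fix x y :: 'a
    show "dist (h x) (h y) \<le> 1 * dist x y"
    proof -
      have "h x \<le> h y + dist x y" "h y \<le> h x + dist x y"
        using H(2)[of x y] H(2)[of y x] by (simp_all add: dist_commute)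
      thus ?thesis by (simp add: dist_real_def abs_le_iff)
    qed
  qed simp
  have "pos_cont (\<lambda>x. h x / 2)" unfolding pos_cont_def
    using lipschitz_on_continuous_on[OF lip] H(3)
    by (auto intro!: continuous_intros)
  then obtain d where d: "pos_cont d" "\<And>x. pseudo_orbit f d x \<Longrightarrow> shadowed f (\<lambda>x. h x / 2) x"
    using assms(3) unfolding topological_shadowing_def by blast
  show "\<exists>\<delta>. pos_cont \<delta> \<and> (\<forall>x. pseudo_orbit f \<delta> x \<longrightarrow>
              (\<exists>y. \<forall>n. dist (x n) (iterz f n y) < e (iterz f n y)))"
  proof (rule exI[of _ d], intro conjI allI impI)
    show "pos_cont d" by (rule d(1))
    fix x assume "pseudo_orbit f d x"
    then obtain y where y: "\<And>n. dist (iterz f n y) (x n) < h (x n) / 2"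
      using d(2) unfolding shadowed_def by blast
    have "\<forall>n. dist (x n) (iterz f n y) < e (iterz f n y)"
    proof
      fix n
      have "h (x n) \<le> h (iterz f n y) + dist (x n) (iterz f n y)" by (rule H(2))
      moreover have "h (iterz f n y) \<le> e (iterz f n y)" by (rule H(1))
      ultimately show "dist (x n) (iterz f n y) < e (iterz f n y)"
        using y[of n] by (simp add: dist_commute)
    qed
    thus "\<exists>y. \<forall>n. dist (x n) (iterz f n y) < e (iterz f n y)" by blast
  qed
qed

end
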